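(* Let $n\ge 2$ and let $\mathsf r=[r_1,\dots,r_{2n-2}]$ be a tree-like factorization of $\lambda_n$. For $j=1,\dots,2n-2$, the element $(r_1\cdots r_{j-1})\,r_j\,(r_{j-1}\cdots r_1)$ is a reflection of the form $(\!(0,m_j)\!)$, where $m_j$ is its value at $0$. Then $\mathsf r$ is cyclic if and only if $m_1<m_2<\dots<m_{2n-2}$.
   Context: The affine symmetric group $\widetilde S_n$ is the group, under composition $(vw)(k)=v(w(k))$, of bijections $w:\mathbb Z\to\mathbb Z$ with $w(i+n)=w(i)+n$ and $\sum_{i=1}^n w(i)=\binom{n+1}{2}$. For $i\not\equiv j\pmod n$, $(\!(i,j)\!)$ is the affine reflection interchanging $i+kn$ and $j+kn$ for all $k\in\mathbb Z$; $(\!(i,j)\!)=(\!(j,i)\!)=(\!(i+kn,j+kn)\!)$. For an integer $i$, "$i\bmod n$" denotes the representative of $i$ modulo $n$ in $\{1,\dots,n\}$. Let $\lambda_n$ be the element with $\lambda_n(k)=k+n$ for $k\not\equiv0\pmod n$ and $\lambda_n(k)=k-n(n-1)$ for $k\equiv 0\pmod n$; its reflection length is $2n-2$. $\textsc{fact}(\lambda_n)$ is the set of sequences $[r_1,\dots,r_{2n-2}]$ of reflections with $r_1\cdots r_{2n-2}=\lambda_n$. Such a sequence is tree-like if one can write $r_i=(\!(a_{i-1},b_i)\!)$ with integers $a_{i-1}<b_i$ ($1\le i\le 2n-2$) and $a_i\equiv b_i\pmod n$ ($1\le i\le 2n-3$). For a tree-like $\mathsf r$ so written and $k\in[n]$,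 let $N_{\mathsf r}(k)$ be the list, in increasing order of $i$, of the values $b_i\bmod n$ over all $i$ with $a_{i-1}\equiv k\pmod n$. A tree-like $\mathsf r$ is cyclic if (i) $N_{\mathsf r}(n)$ is strictly increasing, and (ii) for every $1\le k<n$, writing $N_{\mathsf r}(k)=[c_1,\dots,c_\ell]$, there exists $1\le j\le \ell$ with $c_j<c_{j+1}<\dots<c_{\ell-1}<k<c_1<\dots<c_{j-1}$ (note $c_\ell$ does not appear; it is replaced by $k$). *)

theory Defs
  imports Main
begin

definition affine_sym :: "nat \<Rightarrow> (int \<Rightarrow> int) set" where
  "affine_sym n = {w. bij w \<and> (\<forall>i. w (i + int n) = w i + int n)
                     \<and> (\<Sum>i=1..int n. w i) = int n * (int n + 1) div 2}"

text \<open>The affine reflection ((i,j)): interchanges i+kn and j+kn for all k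
  (meaningful when i and j are not congruent mod n).\<close>
definition aff_refl :: "nat \<Rightarrow> int \<Rightarrow> int \<Rightarrow> int \<Rightarrow> int" where
  "aff_refl n i j = (\<lambda>k. if k mod int n = i mod int n then k - i + j
                         else if k mod int n = j mod int n then k - j + i else k)"

definition reflections :: "nat \<Rightarrow> (int \<Rightarrow> int) set" where
  "reflections n = {aff_refl n i j | i j. i mod int n \<noteq> j mod int n}"

definition modn :: "nat \<Rightarrow> int \<Rightarrow> int" where
  "modn n i = (if i mod int n = 0 then int n else i mod int n)"

definition lambda_n :: "nat \<Rightarrow> int \<Rightarrow> int" where
  "lambda_n n = (\<lambda>k. if k mod int n = 0 then k - int n * (int n - 1) else k + int n)"

text \<open>Product r_1 r_2 ... r_m of a list of permutations (composition, (vw)(k) = v(w(k))).\<close>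
definition lprod :: "(int \<Rightarrow> int) list \<Rightarrow> int \<Rightarrow> int" where
  "lprod rs = foldr (\<circ>) rs id"

definition fact_lambda :: "nat \<Rightarrow> (int \<Rightarrow> int) list set" where
  "fact_lambda n = {rs. length rs = 2 * n - 2 \<and> set rs \<subseteq> reflections n
                        \<and> lprod rs = lambda_n n}"

text \<open>r_i = rs ! (i-1). A tree-like writing: r_i = ((a_{i-1}, b_i)) with a_{i-1} < b_i
  for 1 <= i <= 2n-2, and a_i = b_i mod n for 1 <= i <= 2n-3.\<close>
definition tree_like_repr :: "nat \<Rightarrow> (int \<Rightarrow> int) list \<Rightarrow> (nat \<Rightarrow> int) \<Rightarrow> (nat \<Rightarrow> int) \<Rightarrow> bool" where
  "tree_like_repr n rs a b \<longleftrightarrow>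
     (\<forall>i\<in>{1..2*n-2}. a (i - 1) mod int n \<noteq> b i mod int n \<and>
                      rs ! (i - 1) = aff_refl n (a (i - 1)) (b i) \<and> a (i - 1) < b i) \<and>
     (\<forall>i\<in>{1..2*n-3}. a i mod int n = b i mod int n)"

definition tree_like :: "nat \<Rightarrow> (int \<Rightarrow> int) list \<Rightarrow> bool" where
  "tree_like n rs \<longleftrightarrow> (\<exists>a b. tree_like_repr n rs a b)"

text \<open>N_r(k): values b_i mod n, in increasing order of i, over i with a_{i-1} = k mod n.\<close>
definition Nlist :: "nat \<Rightarrow> (nat \<Rightarrow> int) \<Rightarrow> (nat \<Rightarrow> int) \<Rightarrow> int \<Rightarrow> int list" where
  "Nlist n a b k = map (\<lambda>i. modn n (b i))
      (filter (\<lambda>i. a (i - 1) mod int n = k mod int n) [1..<2*n-1])"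

text \<open>Condition (ii) for a list cs = [c_1,...,c_l]: some 1 <= j <= l with
  c_j < ... < c_{l-1} < k < c_1 < ... < c_{j-1}  (0-indexed: j0 = j-1).\<close>
definition cyc_cond :: "int list \<Rightarrow> int \<Rightarrow> bool" where
  "cyc_cond cs k \<longleftrightarrow> (\<exists>j0 < length cs.
       sorted_wrt (<) (drop j0 (butlast cs) @ [k] @ take j0 cs))"

definition cyclic :: "nat \<Rightarrow> (int \<Rightarrow> int) list \<Rightarrow> bool" where
  "cyclic n rs \<longleftrightarrow> (\<exists>a b. tree_like_repr n rs a b \<and>
       sorted_wrt (<) (Nlist n a b (int n)) \<and>
       (\<forall>k. 1 \<le> k \<and> k < int n \<longrightarrow> cyc_cond (Nlist n a b k) k))"

definition conj_refl :: "(int \<Rightarrow> int) list \<Rightarrow> nat \<Rightarrow> int \<Rightarrow> int" where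
  "conj_refl rs j = lprod (take (j - 1) rs) \<circ> rs ! (j - 1) \<circ> lprod (rev (take (j - 1) rs))"

end

theory Submission
  imports Defs
begin

lemma modeq_shift:
  fixes x p q N :: int
  assumes "x mod N = p mod N"
  shows "(x - p + q) mod N = q mod N"
proof -
  obtain t where "x - p = N * t" using assms mod_eq_dvd_iff by (metis dvdE)
  then have "x - p + q = q + t * N" by simp
  then show ?thesis by simp
qed

lemma aff_refl_period:
  "aff_refl n p q (x + int n) = aff_refl n p q x + int n"
  unfolding aff_refl_def by simp

lemma aff_refl_invol:
  assumes "p mod int n \<noteq> q mod int n"
  shows "aff_refl n p q (aff_refl n p q x) = x"
proof -
  have A: "(x - p + q) mod int n = q mod int n" if "x mod int n = p mod int n"
    using modeq_shift that by blast
  have B: "(x - q + p) mod int n = p mod int n" if "x mod int n = q mod int n"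
    using modeq_shift that by blast
  have C: "q mod int n \<noteq> p mod int n" using assms by auto
  show ?thesis
    by (cases "x mod int n = p mod int n"; cases "x mod int n = q mod int n")
      (simp_all add: aff_refl_def A B assms C)
qed

lemma aff_refl_comp_self:
  assumes "p mod int n \<noteq> q mod int n"
  shows "aff_refl n p q \<circ> aff_refl n p q = id"
  using aff_refl_invol[OF assms] by auto

lemma aff_refl_at_p: "aff_refl n p q p = q"
  unfolding aff_refl_def by simp

lemma aff_refl_at_q:
  assumes "p mod int n \<noteq> q mod int n"
  shows "aff_refl n p q q = p"
  using assms unfolding aff_refl_def by auto

lemma aff_refl_shift:
  assumes "p' mod int n = p mod int n" "q' - p' = q - p"
  shows "aff_refl n p' q' = aff_refl n p q"
proof
  fix x
  have q: "q' mod int n = q mod int n"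
  proof -
    have "q' = (p' - p) + q" using assms(2) by simp
    then show ?thesis using modeq_shift[OF assms(1), of q] by simp
  qed
  show "aff_refl n p' q' x = aff_refl n p q x"
    unfolding aff_refl_def using assms q by auto
qed

definition per :: "nat \<Rightarrow> (int \<Rightarrow> int) \<Rightarrow> bool" where
  "per n F \<longleftrightarrow> (\<forall>x. F (x + int n) = F x + int n)"

lemma per_aff_refl: "per n (aff_refl n p q)"
  unfolding per_def using aff_refl_period by blast

lemma per_nat:
  assumes "per n F"
  shows "F (x + int t * int n) = F x + int t * int n"
proof (induction t)
  case 0 then show ?case by simp
next
  case (Suc t)
  have "F (x + int (Suc t) * int n) = F ((x + int t * int n) + int n)"
    by (simp add: algebra_simps)
  also have "\<dots> = F (x + int t * int n) + int n" using assms unfolding per_def by blast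
  also have "\<dots> = F x + int (Suc t) * int n" using Suc by (simp add: algebra_simps)
  finally show ?case .
qed

lemma per_int:
  assumes "per n F"
  shows "F (x + t * int n) = F x + t * int n"
proof (cases "t \<ge> 0")
  case True
  then obtain s where "t = int s" by (metis nonneg_eq_int)
  then show ?thesis using per_nat[OF assms] by simp
next
  case False
  define s where "s = nat (-t)"
  have s: "t = - int s" using False unfolding s_def by simp
  have "F x = F ((x + t * int n) + int s * int n)" using s by simp
  also have "\<dots> = F (x + t * int n) + int s * int n" using per_nat[OF assms] by blast
  finally show ?thesis using s by simp
qed

lemma per_comp: "per n F \<Longrightarrow> per n G \<Longrightarrow> per n (F \<circ> G)"
  unfolding per_def by simp

lemma per_id: "per n id" unfolding per_def by simp

lemma lprod_Nil[simp]: "lprod [] = id" unfolding lprod_def by simp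
lemma lprod_Cons[simp]: "lprod (f # xs) = f \<circ> lprod xs" unfolding lprod_def by simp
lemma lprod_append: "lprod (xs @ ys) = lprod xs \<circ> lprod ys"
  by (induction xs) (auto simp: comp_assoc)

lemma per_lprod: "(\<And>f. f \<in> set xs \<Longrightarrow> per n f) \<Longrightarrow> per n (lprod xs)"
  by (induction xs) (auto intro: per_comp per_id)

lemma lprod_rev_inv:
  assumes "\<And>f. f \<in> set xs \<Longrightarrow> f \<circ> f = id"
  shows "lprod xs \<circ> lprod (rev xs) = id"
  using assms
proof (induction xs)
  case Nil then show ?case by simp
next
  case (Cons f xs)
  have "lprod (f # xs) \<circ> lprod (rev (f # xs)) = f \<circ> (lprod xs \<circ> lprod (rev xs)) \<circ> f"
    by (simp add: lprod_append comp_assoc)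
  also have "\<dots> = f \<circ> f"
  proof -
    have IH: "lprod xs \<circ> lprod (rev xs) = id" using Cons.IH Cons.prems by (meson list.set_intros(2))
    show ?thesis unfolding IH by simp
  qed
  also have "\<dots> = id" using Cons.prems by (meson list.set_intros(1))
  finally show ?case .
qed

lemma lprod_bij:
  assumes "\<And>f. f \<in> set xs \<Longrightarrow> f \<circ> f = id"
  shows "bij (lprod xs)"
proof -
  have 1: "lprod xs \<circ> lprod (rev xs) = id" using lprod_rev_inv assms by blast
  have 2: "lprod (rev xs) \<circ> lprod xs = id" using lprod_rev_inv[of "rev xs"] assms by simp
  show ?thesis using 1 2 o_bij by blast
qed

lemma class_inj:
  assumes "per n F" "inj F" "F x mod int n = F y mod int n"
  shows "x mod int n = y mod int n"
proof -
  obtain t where t: "F x - F y = int n * t" using assms(3) mod_eq_dvd_iff by (metis dvdE)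
  have "F (y + t * int n) = F y + t * int n" using per_int[OF assms(1)] by blast
  also have "\<dots> = F x" using t by (simp add: algebra_simps)
  finally have "x = y + t * int n" using assms(2) by (simp add: inj_eq)
  then show ?thesis by simp
qed

lemma per_mod:
  assumes "per n F"
  shows "F x mod int n = F (x mod int n) mod int n"
proof -
  have "F x = F (x mod int n + (x div int n) * int n)" by simp
  also have "\<dots> = F (x mod int n) + (x div int n) * int n" using per_int[OF assms] by blast
  finally show ?thesis by simp
qed

lemma conj_aff_refl:
  assumes "per n W" "W \<circ> V = id" "V \<circ> W = id" "p mod int n \<noteq> q mod int n"
  shows "W \<circ> aff_refl n p q \<circ> V = aff_refl n (W p) (W q)"
proof
  fix y
  have injW: "inj W"
  proof (rule injI)
    fix a b assume "W a = W b"
    then have "V (W a) = V (W b)" by simp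
    then show "a = b" using assms(3) by (metis comp_apply id_apply)
  qed
  define x where "x = V y"
  have Wx: "W x = y" using assms(2) unfolding x_def by (metis comp_apply id_apply)
  have ci: "\<And>a b. W a mod int n = W b mod int n \<Longrightarrow> a mod int n = b mod int n"
    using class_inj[OF assms(1) injW] by blast
  have "W (aff_refl n p q x) = aff_refl n (W p) (W q) (W x)"
  proof (cases "x mod int n = p mod int n")
    case True
    obtain t where t: "x - p = int n * t" using True mod_eq_dvd_iff by (metis dvdE)
    have xe: "x = p + t * int n" using t by (metis add.commute diff_add_cancel mult.commute)
    have a1: "aff_refl n p q x = q + t * int n" unfolding aff_refl_def using True xe by simp
    have Wxe: "W x = W p + t * int n" using per_int[OF assms(1)] xe by simp
    have "aff_refl n (W p) (W q) (W x) = W x - W p + W q"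
      unfolding aff_refl_def using Wxe by simp
    then show ?thesis using a1 Wxe per_int[OF assms(1)] by simp
  next
    case F1: False
    show ?thesis
    proof (cases "x mod int n = q mod int n")
      case True
      obtain t where t: "x - q = int n * t" using True mod_eq_dvd_iff by (metis dvdE)
      have xe: "x = q + t * int n" using t by (metis add.commute diff_add_cancel mult.commute)
      have a1: "aff_refl n p q x = p + t * int n" unfolding aff_refl_def using F1 True xe by simp
      have Wxe: "W x = W q + t * int n" using per_int[OF assms(1)] xe by simp
      have np: "W x mod int n \<noteq> W p mod int n" using ci F1 by blast
      have "aff_refl n (W p) (W q) (W x) = W x - W q + W p"
        unfolding aff_refl_def using Wxe np by simp
      then show ?thesis using a1 Wxe per_int[OF assms(1)] by simp
    next
      case False
      have np: "W x mod int n \<noteq> W p mod int n" using ci F1 by blast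
      have nq: "W x mod int n \<noteq> W q mod int n" using ci False by blast
      show ?thesis unfolding aff_refl_def using F1 False np nq by simp
    qed
  qed
  then show "(W \<circ> aff_refl n p q \<circ> V) y = aff_refl n (W p) (W q) y"
    using Wx x_def by simp
qed

fun cseq :: "(nat \<Rightarrow> int) \<Rightarrow> (nat \<Rightarrow> int) \<Rightarrow> nat \<Rightarrow> int" where
  "cseq a b 0 = a 0"
| "cseq a b (Suc i) = cseq a b i + (b (Suc i) - a i)"

declare cseq.simps(2)[simp del]

locale fsetup =
  fixes n :: nat and rs :: "(int \<Rightarrow> int) list" and a b :: "nat \<Rightarrow> int"
  assumes n2: "n \<ge> 2" and len: "length rs = 2*n-2" and prodL: "lprod rs = lambda_n n"
    and repr: "tree_like_repr n rs a b"
begin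

abbreviation "N \<equiv> int n"
abbreviation "L \<equiv> 2*n-2"
abbreviation "c \<equiv> cseq a b"
definition "W i = lprod (take i rs)"
definition "Q i = lprod (drop i rs)"
definition "d i = c i - c (i - 1)"

lemma Npos: "N > 0" using n2 by simp
lemma L2: "L \<ge> 2" using n2 by simp

lemma repr1:
  assumes "1 \<le> i" "i \<le> L"
  shows "a (i - 1) mod N \<noteq> b i mod N" "rs ! (i - 1) = aff_refl n (a (i - 1)) (b i)" "a (i - 1) < b i"
  using repr assms unfolding tree_like_repr_def by auto

lemma repr2:
  assumes "1 \<le> i" "i \<le> L - 1"
  shows "a i mod N = b i mod N"
  using repr assms unfolding tree_like_repr_def by (auto simp: numeral_eq_Suc)

lemma c_a: "i \<le> L - 1 \<Longrightarrow> c i mod N = a i mod N"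
proof (induction i)
  case 0 then show ?case by simp
next
  case (Suc i)
  have "c (Suc i) = c i - a i + b (Suc i)" by (simp add: cseq.simps(2))
  then have "c (Suc i) mod N = b (Suc i) mod N"
    using Suc modeq_shift[of "c i" N "a i" "b (Suc i)"] by simp
  then show ?case using repr2[of "Suc i"] Suc.prems by simp
qed

lemma c_b: "1 \<le> i \<Longrightarrow> i \<le> L \<Longrightarrow> c i mod N = b i mod N"
proof -
  assume i: "1 \<le> i" "i \<le> L"
  then obtain j where j: "i = Suc j" by (cases i) auto
  have "c i = c j - a j + b i" using j by (simp add: cseq.simps(2))
  moreover have "c j mod N = a j mod N" using c_a[of j] i j by simp
  ultimately show ?thesis using modeq_shift[of "c j" N "a j" "b i"] by simp
qed

lemma c_step:
  assumes "i < L"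
  shows "c i < c (Suc i)" "c i mod N \<noteq> c (Suc i) mod N"
    "rs ! i = aff_refl n (c i) (c (Suc i))"
proof -
  have r: "a i mod N \<noteq> b (Suc i) mod N" "rs ! i = aff_refl n (a i) (b (Suc i))" "a i < b (Suc i)"
    using repr1[of "Suc i"] assms by auto
  have cs: "c (Suc i) = c i + (b (Suc i) - a i)" by (simp add: cseq.simps(2))
  show "c i < c (Suc i)" using r(3) cs by simp
  have ca: "c i mod N = a i mod N" using c_a assms by simp
  have cb: "c (Suc i) mod N = b (Suc i) mod N" using c_b[of "Suc i"] assms by simp
  show "c i mod N \<noteq> c (Suc i) mod N" using ca cb r(1) by simp
  show "rs ! i = aff_refl n (c i) (c (Suc i))"
    using r(2) aff_refl_shift[of "c i" n "a i" "c (Suc i)" "b (Suc i)"] ca cs by simp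
qed

lemma c_mono: "i < j \<Longrightarrow> j \<le> L \<Longrightarrow> c i < c j"
proof (induction j)
  case 0 then show ?case by simp
next
  case (Suc j)
  have "c j < c (Suc j)" using c_step(1)[of j] Suc.prems by simp
  then show ?case using Suc by (cases "i = j") auto
qed

lemma rs_refl: "f \<in> set rs \<Longrightarrow> \<exists>i<L. f = aff_refl n (c i) (c (Suc i)) \<and> c i mod N \<noteq> c (Suc i) mod N"
  using c_step len by (metis in_set_conv_nth)

lemma rs_invol: "f \<in> set rs \<Longrightarrow> f \<circ> f = id"
  using rs_refl aff_refl_comp_self by blast

lemma rs_per: "f \<in> set rs \<Longrightarrow> per n f"
  using rs_refl per_aff_refl by blast

lemma set_take_rs: "f \<in> set (take i rs) \<Longrightarrow> f \<in> set rs" by (meson in_set_takeD)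
lemma set_drop_rs: "f \<in> set (drop i rs) \<Longrightarrow> f \<in> set rs" by (meson in_set_dropD)

lemma W_per: "per n (W i)" unfolding W_def by (rule per_lprod) (meson set_take_rs rs_per)
lemma Q_per: "per n (Q i)" unfolding Q_def by (rule per_lprod) (meson set_drop_rs rs_per)
lemma W_bij: "bij (W i)" unfolding W_def by (rule lprod_bij) (meson set_take_rs rs_invol)
lemma Q_bij: "bij (Q i)" unfolding Q_def by (rule lprod_bij) (meson set_drop_rs rs_invol)
lemma W_inj: "inj (W i)" using W_bij bij_is_inj by blast
lemma Q_inj: "inj (Q i)" using Q_bij bij_is_inj by blast

lemma P_split: "lambda_n n = W i \<circ> Q i"
  unfolding W_def Q_def using prodL lprod_append by (metis append_take_drop_id)

lemma W_Suc: "i < L \<Longrightarrow> W (Suc i) = W i \<circ> rs ! i"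
  unfolding W_def using len by (simp add: take_Suc_conv_app_nth lprod_append)

lemma Q_Suc: "i < L \<Longrightarrow> Q i = rs ! i \<circ> Q (Suc i)"
  unfolding Q_def using len by (subst Cons_nth_drop_Suc[symmetric]) auto

lemma Q_L: "Q L = id" unfolding Q_def using len by simp
lemma W_L: "W L = lambda_n n" unfolding W_def using len prodL by simp

lemma ride_W: "i \<le> L \<Longrightarrow> W i (c i) = c 0"
proof (induction i)
  case 0 then show ?case by (simp add: W_def)
next
  case (Suc i)
  have "W (Suc i) (c (Suc i)) = W i (aff_refl n (c i) (c (Suc i)) (c (Suc i)))"
    using W_Suc c_step Suc.prems by simp
  also have "\<dots> = W i (c i)" using aff_refl_at_q c_step(2) Suc.prems by simp
  finally show ?case using Suc by simp
qed

lemma ride_Q: "k \<le> L \<Longrightarrow> Q (L - k) (c L) = c (L - k)"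
proof (induction k)
  case 0 then show ?case by (simp add: Q_L)
next
  case (Suc k)
  define i where "i = L - Suc k"
  have i: "i < L" "Suc i = L - k" using Suc.prems unfolding i_def by auto
  have "Q i (c L) = aff_refl n (c i) (c (Suc i)) (Q (Suc i) (c L))"
    using Q_Suc c_step i by simp
  also have "\<dots> = aff_refl n (c i) (c (Suc i)) (c (Suc i))" using Suc i by simp
  also have "\<dots> = c i" by (rule aff_refl_at_q[OF c_step(2)[OF i(1)]])
  finally show ?case unfolding i_def .
qed

lemma lam_nz: "x mod N \<noteq> 0 \<Longrightarrow> lambda_n n x = x + N" unfolding lambda_n_def by simp
lemma lam_z: "x mod N = 0 \<Longrightarrow> lambda_n n x = x - N * (N - 1)" unfolding lambda_n_def by simp

lemma cL_mod: "c L mod N = 0" and c0_eq: "c 0 = c L - N * (N - 1)"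
proof -
  have "lambda_n n (c L) = c 0" using ride_W[of L] W_L by simp
  moreover have "c 0 < c L" using c_mono[of 0 L] L2 by simp
  ultimately show cz: "c L mod N = 0" using lam_nz[of "c L"] by linarith
  show "c 0 = c L - N * (N - 1)" using lam_z[OF cz] \<open>lambda_n n (c L) = c 0\<close> by simp
qed

lemma c0_mod: "c 0 mod N = 0"
proof -
  have "c 0 = c L + (- (N - 1)) * N" using c0_eq by (simp add: algebra_simps)
  then show ?thesis using cL_mod by (metis mod_mult_self1)
qed

end

lemma two_each:
  fixes f :: "'a \<Rightarrow> nat"
  assumes "finite A" "\<forall>x\<in>A. f x \<ge> 2" "sum f A = 2 * card A" "x \<in> A"
  shows "f x = 2"
proof (rule ccontr)
  assume "f x \<noteq> 2"
  then have "f x > 2" using assms by force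
  then have "sum (\<lambda>_. 2) A < sum f A"
    using sum_strict_mono_ex1[of A "\<lambda>_. 2" f] assms by auto
  then show False using assms by simp
qed

context fsetup
begin

lemma Q_mod0:
  assumes "i \<le> L"
  shows "Q i x mod N = c i mod N \<longleftrightarrow> x mod N = 0"
proof -
  have e: "L - (L - i) = i" using assms by simp
  have QcL: "Q i (c L) = c i" using ride_Q[of "L - i", unfolded e] by simp
  show ?thesis
  proof
    assume "Q i x mod N = c i mod N"
    then have "Q i x mod N = Q i (c L) mod N" using QcL by simp
    then have "x mod N = c L mod N" using class_inj[OF Q_per Q_inj] by blast
    then show "x mod N = 0" using cL_mod by simp
  next
    assume "x mod N = 0"
    then have "Q i x mod N = Q i (c L) mod N"
      using per_mod[OF Q_per, of i x] per_mod[OF Q_per, of i "c L"] cL_mod by simp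
    then show "Q i x mod N = c i mod N" using QcL by simp
  qed
qed

definition "U x = {i \<in> {1..L}. Q i x mod N = c (i - 1) mod N}"

lemma U_fin: "finite (U x)" unfolding U_def by simp
lemma U_sub: "U x \<subseteq> {1..L}" unfolding U_def by auto

lemma c_step':
  assumes "1 \<le> i" "i \<le> L"
  shows "c (i - 1) < c i" "c (i - 1) mod N \<noteq> c i mod N"
    "rs ! (i - 1) = aff_refl n (c (i - 1)) (c i)"
  using c_step[of "i - 1"] assms by auto

lemma d_pos: "1 \<le> i \<Longrightarrow> i \<le> L \<Longrightarrow> d i \<ge> 1"
  using c_step'(1) unfolding d_def by fastforce

lemma Q_step:
  assumes "1 \<le> i" "i \<le> L" "x mod N \<noteq> 0"
  shows "Q (i - 1) x = Q i x + (if i \<in> U x then d i else 0)"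
proof -
  have Qe: "Q (i - 1) x = aff_refl n (c (i - 1)) (c i) (Q i x)"
    using Q_Suc[of "i - 1"] c_step'(3)[OF assms(1,2)] assms by simp
  have nci: "Q i x mod N \<noteq> c i mod N" using Q_mod0 assms by blast
  show ?thesis
  proof (cases "i \<in> U x")
    case True
    then have "Q i x mod N = c (i - 1) mod N" unfolding U_def by simp
    then show ?thesis using Qe True unfolding aff_refl_def d_def by simp
  next
    case False
    then have "Q i x mod N \<noteq> c (i - 1) mod N" unfolding U_def using assms by simp
    then show ?thesis using Qe False nci unfolding aff_refl_def by simp
  qed
qed

lemma Q_tele:
  assumes "x mod N \<noteq> 0" "k \<le> L"
  shows "Q (L - k) x = x + (\<Sum>j\<in>{j \<in> U x. L - k < j}. d j)"
  using assms(2)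
proof (induction k)
  case 0
  have e: "{j \<in> U x. L - 0 < j} = {}" using U_sub by fastforce
  show ?case unfolding e by (simp add: Q_L)
next
  case (Suc k)
  define i where "i = L - k"
  have i: "1 \<le> i" "i \<le> L" "L - Suc k = i - 1" using Suc.prems unfolding i_def by auto
  have IH: "Q i x = x + (\<Sum>j\<in>{j \<in> U x. i < j}. d j)" using Suc unfolding i_def by simp
  have st: "Q (i - 1) x = Q i x + (if i \<in> U x then d i else 0)" using Q_step i assms by blast
  have fin: "finite {j \<in> U x. i < j}" using U_fin by simp
  show ?case
  proof (cases "i \<in> U x")
    case True
    have "{j \<in> U x. i - 1 < j} = insert i {j \<in> U x. i < j}" using True i by auto
    then have "(\<Sum>j\<in>{j \<in> U x. i - 1 < j}. d j) = d i + (\<Sum>j\<in>{j \<in> U x. i < j}. d j)"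
      using fin by simp
    then show ?thesis using st IH True i by simp
  next
    case False
    have "{j \<in> U x. i - 1 < j} = {j \<in> U x. i < j}"
    proof (rule Collect_cong)
      fix j show "(j \<in> U x \<and> i - 1 < j) = (j \<in> U x \<and> i < j)"
        using False i by (cases "j = i") auto
    qed
    then show ?thesis using st IH False i by simp
  qed
qed

lemma Q_tele':
  assumes "x mod N \<noteq> 0" "i \<le> L"
  shows "Q i x = x + (\<Sum>j\<in>{j \<in> U x. i < j}. d j)"
proof -
  have e: "L - (L - i) = i" using assms by simp
  show ?thesis using Q_tele[OF assms(1), of "L - i", unfolded e] by simp
qed

lemma U_sum:
  assumes "x mod N \<noteq> 0"
  shows "(\<Sum>j\<in>U x. d j) = N"
proof -
  have "{j \<in> U x. 0 < j} = U x" using U_sub by fastforce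
  then have "Q 0 x = x + (\<Sum>j\<in>U x. d j)" using Q_tele'[OF assms, of 0] by simp
  moreover have "Q 0 x = x + N" using P_split[of 0] lam_nz[OF assms] by (simp add: W_def)
  ultimately show ?thesis by simp
qed

lemma tok_ex:
  assumes "1 \<le> i" "i \<le> L"
  shows "\<exists>u. 1 \<le> u \<and> u \<le> N - 1 \<and> i \<in> U u"
proof -
  obtain y where y: "Q i y = c (i - 1)" using Q_bij by (metis bij_pointE)
  define u where "u = y mod N"
  have ne: "c (i - 1) mod N \<noteq> c i mod N" using c_step' assms by blast
  have "y mod N \<noteq> 0" using Q_mod0[of i y] assms y ne by auto
  then have u: "1 \<le> u" "u \<le> N - 1" unfolding u_def using Npos
    by (smt (verit) pos_mod_bound pos_mod_sign)+
  have "Q i u mod N = Q i y mod N" using per_mod[OF Q_per, of i y] unfolding u_def by simp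
  then have "i \<in> U u" unfolding U_def using assms y by simp
  then show ?thesis using u by blast
qed

lemma tok_uniq:
  assumes "1 \<le> u" "u \<le> N - 1" "1 \<le> u'" "u' \<le> N - 1" "i \<in> U u" "i \<in> U u'"
  shows "u = u'"
proof -
  have "Q i u mod N = Q i u' mod N" using assms(5,6) unfolding U_def by simp
  then have "u mod N = u' mod N" using class_inj[OF Q_per Q_inj] by blast
  then show ?thesis using assms(1-4) by simp
qed

lemma U_card_ge2:
  assumes "1 \<le> u" "u \<le> N - 1"
  shows "card (U u) \<ge> 2"
proof -
  have nz: "u mod N \<noteq> 0" using assms by simp
  have s: "(\<Sum>j\<in>U u. d j) = N" using U_sum[OF nz] .
  have "U u \<noteq> {}" using s Npos by auto
  moreover have "\<not> (\<exists>i. U u = {i})"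
  proof
    assume "\<exists>i. U u = {i}"
    then obtain i where i: "U u = {i}" by blast
    then have "d i = N" using s by simp
    moreover have "i \<in> {1..L}" using i U_sub[of u] by blast
    then have "1 \<le> i" "i \<le> L" by auto
    ultimately have "c i = c (i - 1) + N" unfolding d_def by simp
    then have "c i mod N = c (i - 1) mod N" by simp
    then show False using c_step' \<open>1 \<le> i\<close> \<open>i \<le> L\<close> by metis
  qed
  ultimately show ?thesis using U_fin[of u]
  proof -
    have "card (U u) \<noteq> 0" using \<open>U u \<noteq> {}\<close> U_fin[of u] by simp
    moreover have "card (U u) \<noteq> 1" using \<open>\<not> (\<exists>i. U u = {i})\<close> by (simp add: card_1_singleton_iff)
    ultimately show ?thesis by arith
  qed
qed

lemma U_card2:
  assumes "1 \<le> u" "u \<le> N - 1"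
  shows "card (U u) = 2"
proof -
  let ?I = "{1..N - 1}"
  have disj: "\<forall>u\<in>?I. \<forall>u'\<in>?I. u \<noteq> u' \<longrightarrow> U u \<inter> U u' = {}"
    using tok_uniq by fastforce
  have un: "(\<Union>u\<in>?I. U u) = {1..L}"
  proof
    show "(\<Union>u\<in>?I. U u) \<subseteq> {1..L}" using U_sub by blast
    show "{1..L} \<subseteq> (\<Union>u\<in>?I. U u)" using tok_ex by fastforce
  qed
  have "card (\<Union>u\<in>?I. U u) = (\<Sum>u\<in>?I. card (U u))"
    using card_UN_disjoint[of ?I U] disj U_fin by simp
  then have "(\<Sum>u\<in>?I. card (U u)) = L" using un by simp
  also have "L = 2 * card ?I" using n2 by simp
  finally have "(\<Sum>u\<in>?I. card (U u)) = 2 * card ?I" .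
  moreover have "\<forall>x\<in>?I. card (U x) \<ge> 2" using U_card_ge2 by simp
  moreover have "u \<in> ?I" using assms by simp
  ultimately show ?thesis by (intro two_each[of ?I "\<lambda>u. card (U u)" u]) auto
qed

end

context fsetup
begin

definition "al u = Min (U u)"
definition "be u = Max (U u)"
definition "tok i = (THE u. 1 \<le> u \<and> u \<le> N - 1 \<and> i \<in> U u)"

lemma U_pair:
  assumes "1 \<le> u" "u \<le> N - 1"
  shows "U u = {al u, be u}" "al u < be u"
proof -
  have "\<exists>x y. U u = {x, y} \<and> x \<noteq> y" using U_card2[OF assms] by (simp add: card_2_iff)
  then obtain x y where xy: "x \<noteq> y" "U u = {x, y}" by blast
  have "al u = min x y" "be u = max x y" unfolding al_def be_def xy(2) by simp_all
  then show "U u = {al u, be u}" "al u < be u" using xy unfolding min_def max_def by auto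
qed

lemma al_in: "1 \<le> u \<Longrightarrow> u \<le> N - 1 \<Longrightarrow> al u \<in> U u"
  using U_pair(1) by (metis insertI1)
lemma be_in: "1 \<le> u \<Longrightarrow> u \<le> N - 1 \<Longrightarrow> be u \<in> U u"
  using U_pair(1) by (metis insertI1 insertI2)
lemma al_range: "1 \<le> u \<Longrightarrow> u \<le> N - 1 \<Longrightarrow> 1 \<le> al u \<and> al u \<le> L"
proof -
  assume "1 \<le> u" "u \<le> N - 1"
  then have "al u \<in> {1..L}" using al_in U_sub by (meson subsetD)
  then show ?thesis by simp
qed
lemma be_range: "1 \<le> u \<Longrightarrow> u \<le> N - 1 \<Longrightarrow> 1 \<le> be u \<and> be u \<le> L"
proof -
  assume "1 \<le> u" "u \<le> N - 1"
  then have "be u \<in> {1..L}" using be_in U_sub by (meson subsetD)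
  then show ?thesis by simp
qed

lemma pair_sum:
  assumes "1 \<le> u" "u \<le> N - 1"
  shows "d (al u) + d (be u) = N"
proof -
  have "u mod N \<noteq> 0" using assms by simp
  then have "(\<Sum>j\<in>U u. d j) = N" using U_sum by blast
  then show ?thesis using U_pair[OF assms] by simp
qed

lemma tok:
  assumes "1 \<le> i" "i \<le> L"
  shows "1 \<le> tok i" "tok i \<le> N - 1" "i \<in> U (tok i)"
proof -
  have ex: "\<exists>!u. 1 \<le> u \<and> u \<le> N - 1 \<and> i \<in> U u" using tok_ex[OF assms] tok_uniq by blast
  show "1 \<le> tok i" "tok i \<le> N - 1" "i \<in> U (tok i)"
    using theI'[OF ex] unfolding tok_def by auto
qed

lemma tok_eq:
  assumes "1 \<le> u" "u \<le> N - 1" "i \<in> U u"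
  shows "tok i = u"
proof -
  have "i \<in> {1..L}" using assms(3) U_sub by (meson subsetD)
  then have "1 \<le> tok i" "tok i \<le> N - 1" "i \<in> U (tok i)" using tok by auto
  then show ?thesis using tok_uniq assms by blast
qed

lemma tok_al_be:
  assumes "1 \<le> i" "i \<le> L"
  shows "i = al (tok i) \<or> i = be (tok i)"
proof -
  have "i \<in> {al (tok i), be (tok i)}" using tok[OF assms] U_pair(1)[of "tok i"] by simp
  then show ?thesis by simp
qed

lemma d_le:
  assumes "1 \<le> i" "i \<le> L"
  shows "d i \<le> N - 1"
proof -
  let ?u = "tok i"
  have u: "1 \<le> ?u" "?u \<le> N - 1" using tok assms by auto
  have s: "d (al ?u) + d (be ?u) = N" using pair_sum u by blast
  have "d (al ?u) \<ge> 1" using d_pos al_range[OF u] by auto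
  moreover have "d (be ?u) \<ge> 1" using d_pos be_range[OF u] by auto
  ultimately show ?thesis using tok_al_be[OF assms] s by auto
qed

lemma traj:
  assumes "1 \<le> u" "u \<le> N - 1" "i \<le> L"
  shows "Q i u = u + (if i < al u then N else if i < be u then d (be u) else 0)"
proof -
  have nz: "u mod N \<noteq> 0" using assms by simp
  have p: "U u = {al u, be u}" "al u < be u" using U_pair assms by auto
  have Qt: "Q i u = u + (\<Sum>j\<in>{j \<in> U u. i < j}. d j)" using Q_tele'[OF nz assms(3)] .
  show ?thesis
  proof (cases "i < al u")
    case True
    then have "{j \<in> U u. i < j} = U u" using p by auto
    then show ?thesis using Qt True U_sum[OF nz] by simp
  next
    case F: False
    show ?thesis
    proof (cases "i < be u")
      case True
      then have "{j \<in> U u. i < j} = {be u}" using p F by auto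
      then show ?thesis using Qt True F by simp
    next
      case False
      then have e: "{j \<in> U u. i < j} = {}" using p F by auto
      show ?thesis using Qt[unfolded e] False F by simp
    qed
  qed
qed

lemma cls_be:
  assumes "1 \<le> u" "u \<le> N - 1"
  shows "c (be u - 1) mod N = u"
proof -
  have "be u \<in> U u" using U_pair assms by blast
  then have "Q (be u) u mod N = c (be u - 1) mod N" unfolding U_def by simp
  moreover have "Q (be u) u = u" using traj[OF assms, of "be u"] be_range[OF assms] U_pair[OF assms] by simp
  ultimately show ?thesis using assms by simp
qed

lemma cls_al:
  assumes "1 \<le> u" "u \<le> N - 1"
  shows "c (al u - 1) mod N = c (be u) mod N"
proof -
  have "al u \<in> U u" using U_pair assms by blast
  then have 1: "Q (al u) u mod N = c (al u - 1) mod N" unfolding U_def by simp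
  have 2: "Q (al u) u = u + d (be u)" using traj[OF assms, of "al u"] al_range[OF assms] U_pair[OF assms] by simp
  have 3: "u mod N = c (be u - 1) mod N" using cls_be[OF assms] assms by simp
  have "(u - c (be u - 1) + c (be u)) mod N = c (be u) mod N" using modeq_shift[OF 3] .
  then show ?thesis using 1 2 unfolding d_def by (simp add: algebra_simps)
qed

lemma cls_al2:
  assumes "1 \<le> u" "u \<le> N - 1"
  shows "c (al u) mod N = u"
proof -
  have r: "1 \<le> al u" "al u \<le> L" using al_range[OF assms] by auto
  have nz: "u mod N \<noteq> 0" using assms by simp
  have "al u \<in> U u" using U_pair assms by blast
  then have 1: "Q (al u) u mod N = c (al u - 1) mod N" unfolding U_def by simp
  have "Q (al u - 1) u = Q (al u) u + d (al u)" using Q_step[OF r nz] \<open>al u \<in> U u\<close> by simp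
  moreover have "Q (al u - 1) u = u + N" using traj[OF assms, of "al u - 1"] r by simp
  ultimately have "u + N = Q (al u) u - c (al u - 1) + c (al u)" unfolding d_def by simp
  moreover have "(Q (al u) u - c (al u - 1) + c (al u)) mod N = c (al u) mod N"
    using modeq_shift[OF 1] .
  ultimately have "c (al u) mod N = (u + N) mod N" by simp
  then show ?thesis using assms by simp
qed

lemma untouched_after:
  assumes "1 \<le> u" "u \<le> N - 1" "be u < i" "i \<le> L"
  shows "c (i - 1) mod N \<noteq> u"
proof -
  have "i \<notin> U u" using U_pair[OF assms(1,2)] assms(3) by auto
  then have "Q i u mod N \<noteq> c (i - 1) mod N" unfolding U_def using assms by auto
  moreover have "Q i u = u" using traj[OF assms(1,2,4)] assms(3) U_pair[OF assms(1,2)] by simp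
  ultimately show ?thesis using assms by simp
qed

lemma untouched_mid:
  assumes "1 \<le> u" "u \<le> N - 1" "al u < i" "i < be u"
  shows "c (i - 1) mod N \<noteq> c (be u) mod N"
proof -
  have bl: "be u \<le> L" using be_range[OF assms(1,2)] by simp
  have "i \<notin> U u" using U_pair[OF assms(1,2)] assms(3,4) by auto
  then have "Q i u mod N \<noteq> c (i - 1) mod N" unfolding U_def using assms bl by auto
  moreover have "Q i u = u + d (be u)" using traj[OF assms(1,2), of i] assms bl by simp
  moreover have "(u - c (be u - 1) + c (be u)) mod N = c (be u) mod N"
    using modeq_shift cls_be[OF assms(1,2)] assms(1,2) by simp
  ultimately show ?thesis unfolding d_def by (simp add: algebra_simps)
qed

lemma M_formula:
  assumes "1 \<le> j" "j \<le> L"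
  shows "W (j - 1) (c j) = c j + (if j = be (tok j) then N - d j else 0)"
proof -
  define u where "u = tok j"
  have u: "1 \<le> u" "u \<le> N - 1" "j \<in> U u" using tok assms unfolding u_def by auto
  have nz: "u mod N \<noteq> 0" using u by simp
  define y where "y = Q j u"
  have ym: "y mod N = c (j - 1) mod N" using u(3) unfolding U_def y_def by simp
  obtain t where t: "y - c (j - 1) = N * t" using ym mod_eq_dvd_iff by (metis dvdE)
  have Qj1: "Q (j - 1) u = y + d j" using Q_step[OF assms nz] u(3) unfolding y_def by simp
  have "Q (j - 1) u = c j + t * N" using Qj1 t unfolding d_def by (simp add: algebra_simps)
  moreover have "lambda_n n u = W (j - 1) (Q (j - 1) u)" using P_split[of "j - 1"] by simp
  moreover have "lambda_n n u = u + N" using lam_nz nz by simp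
  ultimately have "u + N = W (j - 1) (c j) + t * N" using per_int[OF W_per] by simp
  then have We: "W (j - 1) (c j) = u + N - y + c (j - 1)" using t by (simp add: algebra_simps)
  have p: "U u = {al u, be u}" "al u < be u" using U_pair u by auto
  show ?thesis
  proof (cases "j = be u")
    case True
    have "y = u" using traj[OF u(1,2), of j] assms True p unfolding y_def by simp
    then show ?thesis using We True unfolding u_def d_def by simp
  next
    case False
    then have ja: "j = al u" using u(3) p by auto
    have "y = u + d (be u)" using traj[OF u(1,2), of j] assms ja p unfolding y_def by simp
    moreover have "d (be u) = N - d j" using pair_sum[OF u(1,2)] ja by simp
    ultimately show ?thesis using We False unfolding u_def d_def by simp
  qed
qed

end

context fsetup
begin

definition "late j \<longleftrightarrow> j = be (tok j)"
definition "M j = W (j - 1) (c j)"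

lemma cons_ne: "1 \<le> i \<Longrightarrow> i \<le> L \<Longrightarrow> c (i - 1) mod N \<noteq> c i mod N"
  using c_step' by blast

lemma late_al: "1 \<le> u \<Longrightarrow> u \<le> N - 1 \<Longrightarrow> \<not> late (al u)"
  unfolding late_def using tok_eq al_in U_pair(2) by fastforce

lemma late_be: "1 \<le> u \<Longrightarrow> u \<le> N - 1 \<Longrightarrow> late (be u)"
  unfolding late_def using tok_eq be_in by fastforce

lemma not_late_al:
  assumes "1 \<le> j" "j \<le> L" "\<not> late j"
  shows "j = al (tok j)"
  using tok_al_be[OF assms(1,2)] assms(3) unfolding late_def by blast

lemma descent:
  assumes u: "1 \<le> u" "u \<le> N - 1"
  shows "1 \<le> i \<Longrightarrow> i \<le> al u \<Longrightarrow> c (i - 1) mod N \<noteq> u"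
proof (induction i rule: less_induct)
  case (less i)
  show ?case
  proof
    assume ci: "c (i - 1) mod N = u"
    have alr: "1 \<le> al u" "al u \<le> L" using al_range[OF u] by auto
    have ber: "1 \<le> be u" "be u \<le> L" using be_range[OF u] by auto
    show False
    proof (cases "i = al u")
      case True
      have "c (be u) mod N = u" using ci True cls_al[OF u] by simp
      moreover have "c (be u - 1) mod N = u" using cls_be[OF u] .
      ultimately show False using cons_ne[OF ber] by simp
    next
      case False
      then have ilt: "i < al u" using less.prems by simp
      show False
      proof (cases "i = 1")
        case True
        then show False using ci c0_mod u by simp
      next
        case False
        define j where "j = i - 1"
        have j: "1 \<le> j" "j \<le> L" "j < i" using False less.prems ilt alr unfolding j_def by auto
        define u' where "u' = tok j"
        have u': "1 \<le> u'" "u' \<le> N - 1" using tok[OF j(1,2)] unfolding u'_def by auto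
        have cj: "c j mod N = u" using ci unfolding j_def .
        show False
        proof (cases "late j")
          case False
          then have "j = al u'" using not_late_al j unfolding u'_def by blast
          then have "c j mod N = u'" using cls_al2[OF u'] by simp
          then have "u' = u" using cj by simp
          then show False using \<open>j = al u'\<close> ilt j unfolding j_def by simp
        next
          case True
          then have jb: "j = be u'" unfolding late_def u'_def by simp
          have "c (al u' - 1) mod N = u" using cls_al[OF u'] jb cj by simp
          moreover have "al u' < i" using U_pair(2)[OF u'] jb j by simp
          moreover have "1 \<le> al u'" using al_range[OF u'] by simp
          moreover have "al u' \<le> al u" using \<open>al u' < i\<close> ilt by simp
          ultimately show False using less.IH by blast
        qed
      qed
    qed
  qed
qed

lemma M_late: "1 \<le> j \<Longrightarrow> j \<le> L \<Longrightarrow> M j = c j + (if late j then N - d j else 0)"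
  unfolding M_def late_def using M_formula by simp

definition "Inc \<longleftrightarrow> (\<forall>j. 1 \<le> j \<longrightarrow> j < L \<longrightarrow> M j < M (Suc j))"
definition "Inc' \<longleftrightarrow> (\<forall>j. 1 \<le> j \<longrightarrow> j < L \<longrightarrow> late j \<longrightarrow> \<not> late (Suc j) \<longrightarrow> N < d j + d (Suc j))"
definition "Cyc' \<longleftrightarrow> (\<forall>p q. 1 \<le> p \<longrightarrow> p < q \<longrightarrow> q \<le> L \<longrightarrow> c (p - 1) mod N = c (q - 1) mod N
      \<longrightarrow> \<not> late q \<longrightarrow> d p < d q)"

lemma Inc_iff: "Inc \<longleftrightarrow> Inc'"
proof -
  have key: "M j < M (Suc j) \<longleftrightarrow> (late j \<longrightarrow> \<not> late (Suc j) \<longrightarrow> N < d j + d (Suc j))"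
    if j: "1 \<le> j" "j < L" for j
  proof -
    have m1: "M j = c j + (if late j then N - d j else 0)" using M_late j by simp
    have m2: "M (Suc j) = c (Suc j) + (if late (Suc j) then N - d (Suc j) else 0)" using M_late j by simp
    have cs: "c (Suc j) = c j + d (Suc j)" unfolding d_def by simp
    have d1: "1 \<le> d j" "d j \<le> N - 1" using d_pos d_le j by auto
    have d2: "1 \<le> d (Suc j)" "d (Suc j) \<le> N - 1" using d_pos[of "Suc j"] d_le[of "Suc j"] j by auto
    show ?thesis using m1 m2 cs d1 d2 by auto
  qed
  show ?thesis unfolding Inc_def Inc'_def using key by auto
qed

lemma Cyc_Inc: "Cyc' \<Longrightarrow> Inc'"
  unfolding Inc'_def
proof (intro allI impI)
  fix j assume C: Cyc' and j: "1 \<le> j" "j < L" and lj: "late j" and nl: "\<not> late (Suc j)"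
  define u where "u = tok j"
  have u: "1 \<le> u" "u \<le> N - 1" using tok j unfolding u_def by auto
  have jb: "j = be u" using lj unfolding late_def u_def by simp
  have p: "1 \<le> al u" "al u < Suc j" using al_range[OF u] U_pair(2)[OF u] jb by auto
  have "c (al u - 1) mod N = c (Suc j - 1) mod N" using cls_al[OF u] jb by simp
  then have "d (al u) < d (Suc j)" using C p j nl unfolding Cyc'_def by auto
  moreover have "d (al u) = N - d j" using pair_sum[OF u] jb by simp
  ultimately show "N < d j + d (Suc j)" by simp
qed

lemma Inc_Cyc: "Inc' \<Longrightarrow> Cyc'"
proof -
  assume I: Inc'
  have "\<forall>p. 1 \<le> p \<longrightarrow> p < q \<longrightarrow> q \<le> L \<longrightarrow> c (p - 1) mod N = c (q - 1) mod N
      \<longrightarrow> \<not> late q \<longrightarrow> d p < d q" for q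
  proof (induction q rule: less_induct)
    case (less q)
    show ?case
    proof (intro allI impI)
      fix p assume p: "1 \<le> p" "p < q" "q \<le> L" and cl: "c (p - 1) mod N = c (q - 1) mod N"
        and nl: "\<not> late q"
      define j where "j = q - 1"
      have j: "1 \<le> j" "j < L" "Suc j = q" "p \<le> j" using p unfolding j_def by auto
      define u where "u = tok j"
      have u: "1 \<le> u" "u \<le> N - 1" using tok j unfolding u_def by auto
      show "d p < d q"
      proof (cases "late j")
        case True
        have jb: "j = be u" using True unfolding late_def u_def by simp
        have "N < d j + d q" using I True nl j unfolding Inc'_def by auto
        moreover have "d (al u) = N - d j" using pair_sum[OF u] jb by simp
        ultimately have aq: "d (al u) < d q" by simp
        have cpj: "c (p - 1) mod N = c j mod N" using cl unfolding j_def by simp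
        have "p \<noteq> j"
        proof
          assume "p = j"
          then show False using cpj cons_ne[of j] j by simp
        qed
        then have pj: "p < be u" using j jb by simp
        have "\<not> al u < p"
        proof
          assume "al u < p"
          then have "c (p - 1) mod N \<noteq> c (be u) mod N" using untouched_mid[OF u] pj by blast
          then show False using cpj jb by simp
        qed
        then have "p \<le> al u" by simp
        show ?thesis
        proof (cases "p = al u")
          case True then show ?thesis using aq by simp
        next
          case False
          then have pa: "p < al u" using \<open>p \<le> al u\<close> by simp
          have aq': "al u < q" using U_pair(2)[OF u] jb j by simp
          have "c (p - 1) mod N = c (al u - 1) mod N" using cpj cls_al[OF u] jb by simp
          moreover have "\<not> late (al u)" using late_al[OF u] .
          ultimately have "d p < d (al u)" using less.IH[OF aq'] p pa aq' by auto
          then show ?thesis using aq by simp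
        qed
      next
        case False
        then have ja: "j = al u" using not_late_al j unfolding u_def by auto
        have "c j mod N = u" using cls_al2[OF u] ja by simp
        then have "c (p - 1) mod N = u" using cl unfolding j_def by simp
        moreover have "c (p - 1) mod N \<noteq> u" using descent[OF u, of p] p j ja by simp
        ultimately show ?thesis by simp
      qed
    qed
  qed
  then show Cyc' unfolding Cyc'_def by blast
qed

lemma Inc_Cyc_iff: "Inc \<longleftrightarrow> Cyc'"
  using Inc_iff Inc_Cyc Cyc_Inc by blast

end

lemma sorted_filter_iff:
  fixes xs :: "nat list"
  assumes "sorted_wrt (<) xs"
  shows "sorted_wrt R (filter P xs) \<longleftrightarrow> (\<forall>p\<in>set xs. \<forall>q\<in>set xs. p < q \<longrightarrow> P p \<longrightarrow> P q \<longrightarrow> R p q)"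
  using assms
proof (induction xs)
  case Nil then show ?case by simp
next
  case (Cons x xs)
  have s: "sorted_wrt (<) xs" "\<forall>y\<in>set xs. x < y" using Cons.prems by auto
  show ?case
  proof (cases "P x")
    case True
    then show ?thesis using Cons.IH[OF s(1)] s(2) by auto
  next
    case False
    then show ?thesis using Cons.IH[OF s(1)] s(2) by auto
  qed
qed

lemma mod_gt: "(k::int) < x \<Longrightarrow> x \<le> M \<Longrightarrow> 1 \<le> k \<Longrightarrow> (x - k) mod M = x - k"
  by (simp add: mod_pos_pos_trivial)

lemma mod_lt: "(x::int) < k \<Longrightarrow> 1 \<le> x \<Longrightarrow> k < M \<Longrightarrow> (x - k) mod M = x - k + M"
proof -
  assume h: "x < k" "1 \<le> x" "k < M"
  have "(x - k) mod M = (x - k + M) mod M" by simp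
  also have "\<dots> = x - k + M" by (rule mod_pos_pos_trivial) (use h in auto)
  finally show ?thesis .
qed

lemma cyc_lemma:
  fixes k M :: int and cs :: "int list"
  assumes k: "1 \<le> k" "k < M" and ne: "cs \<noteq> []"
    and el: "\<forall>x\<in>set (butlast cs). 1 \<le> x \<and> x \<le> M \<and> x \<noteq> k"
  shows "cyc_cond cs k \<longleftrightarrow> sorted_wrt (\<lambda>x y. (x - k) mod M < (y - k) mod M) (butlast cs)"
proof -
  let ?xs = "butlast cs"
  let ?g = "\<lambda>x. (x - k) mod M"
  have tk: "take j cs = take j ?xs" if "j \<le> length ?xs" for j
  proof -
    have "length ?xs = length cs - 1" by simp
    then have "j < length cs" using that ne by (metis One_nat_def Suc_pred length_greater_0_conv less_Suc_eq_le)
    then show ?thesis by (simp add: take_butlast)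
  qed
  have gt: "?g x = x - k" if "k < x" "x \<le> M" for x using mod_gt that k by simp
  have lt: "?g x = x - k + M" if "x < k" "1 \<le> x" for x using mod_lt that k by simp
  show ?thesis
  proof
    assume "cyc_cond cs k"
    then obtain j where j: "j < length cs" and
      so: "sorted_wrt (<) (drop j ?xs @ [k] @ take j cs)" unfolding cyc_cond_def by blast
    have jl: "j \<le> length ?xs" using j by simp
    let ?T = "take j ?xs" and ?D = "drop j ?xs"
    have so': "sorted_wrt (<) (?D @ [k] @ ?T)" using so tk[OF jl] by simp
    have D: "sorted_wrt (<) ?D" "\<forall>x\<in>set ?D. x < k" using so' by (auto simp: sorted_wrt_append)
    have T: "sorted_wrt (<) ?T" "\<forall>x\<in>set ?T. k < x" using so' by (auto simp: sorted_wrt_append)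
    have elT: "\<forall>x\<in>set ?T. 1 \<le> x \<and> x \<le> M" using el by (meson in_set_takeD)
    have elD: "\<forall>x\<in>set ?D. 1 \<le> x \<and> x \<le> M" using el by (meson in_set_dropD)
    have "sorted_wrt (\<lambda>x y. ?g x < ?g y) ?T"
      using T(1) by (rule sorted_wrt_mono_rel[rotated]) (use elT T(2) gt in auto)
    moreover have "sorted_wrt (\<lambda>x y. ?g x < ?g y) ?D"
      using D(1) by (rule sorted_wrt_mono_rel[rotated]) (use elD D(2) lt in force)
    moreover have "\<forall>x\<in>set ?T. \<forall>y\<in>set ?D. ?g x < ?g y"
      using T(2) D(2) elT elD gt lt by fastforce
    ultimately have "sorted_wrt (\<lambda>x y. ?g x < ?g y) (?T @ ?D)" unfolding sorted_wrt_append by blast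
    then show "sorted_wrt (\<lambda>x y. ?g x < ?g y) ?xs" by (simp only: append_take_drop_id)
  next
    assume S: "sorted_wrt (\<lambda>x y. ?g x < ?g y) ?xs"
    let ?T = "takeWhile (\<lambda>x. k < x) ?xs" and ?D = "dropWhile (\<lambda>x. k < x) ?xs"
    define j where "j = length ?T"
    have jl: "j \<le> length ?xs" unfolding j_def by (metis length_takeWhile_le)
    have Tj: "take j ?xs = ?T" unfolding j_def by (metis append_eq_conv_conj takeWhile_dropWhile_id)
    have Dj: "drop j ?xs = ?D" unfolding j_def by (metis append_eq_conv_conj takeWhile_dropWhile_id)
    have TD: "?xs = ?T @ ?D" by simp
    have S2: "sorted_wrt (\<lambda>x y. ?g x < ?g y) (?T @ ?D)" using S TD by simp
    have elT: "\<forall>x\<in>set ?T. 1 \<le> x \<and> x \<le> M \<and> k < x" using el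
      by (metis set_takeWhileD)
    have elD: "\<forall>x\<in>set ?D. 1 \<le> x \<and> x \<le> M \<and> x \<noteq> k" using el
      by (meson set_dropWhileD)
    have Dlt: "\<forall>x\<in>set ?D. x < k"
    proof (cases ?D)
      case Nil then show ?thesis by (metis empty_iff list.set(1))
    next
      case (Cons h t)
      have h: "\<not> k < h" using Cons hd_dropWhile[of "\<lambda>x. k < x" ?xs] by (metis list.distinct(1) list.sel(1))
      have hm: "1 \<le> h" "h \<noteq> k" using elD Cons by auto
      then have hk: "h < k" using h by simp
      have "sorted_wrt (\<lambda>x y. ?g x < ?g y) ?D" using S2[unfolded sorted_wrt_append] by blast
      then have "\<forall>y\<in>set t. ?g h < ?g y" using Cons by simp
      moreover have "?g h = h - k + M" using lt hk hm by simp
      moreover have "\<forall>y\<in>set t. \<not> k < y"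
      proof
        fix y assume y: "y \<in> set t"
        show "\<not> k < y"
        proof
          assume ky: "k < y"
          have "y \<le> M" using elD Cons y by auto
          then have "?g y = y - k" using gt ky by simp
          moreover have "?g h < ?g y" using y \<open>\<forall>y\<in>set t. ?g h < ?g y\<close> by blast
          ultimately show False using \<open>?g h = h - k + M\<close> hm \<open>y \<le> M\<close> by simp
        qed
      qed
      then have "\<forall>y\<in>set t. y < k" using elD Cons by fastforce
      then show ?thesis using Cons hk by simp
    qed
    have sT: "sorted_wrt (<) ?T"
    proof -
      have "sorted_wrt (\<lambda>x y. ?g x < ?g y) ?T" using S2[unfolded sorted_wrt_append] by blast
      then show ?thesis by (rule sorted_wrt_mono_rel[rotated]) (use elT gt in auto)
    qed
    have sD: "sorted_wrt (<) ?D"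
    proof -
      have "sorted_wrt (\<lambda>x y. ?g x < ?g y) ?D" using S2[unfolded sorted_wrt_append] by blast
      then show ?thesis by (rule sorted_wrt_mono_rel[rotated]) (use elD Dlt lt in force)
    qed
    have c1: "\<forall>x\<in>set ?D. \<forall>y\<in>set ?T. x < y" using Dlt elT by force
    have fin: "sorted_wrt (<) (D' @ [k] @ T')" if "D' = ?D" "T' = ?T" for D' T'
    proof -
      have a1: "sorted_wrt (<) D'" "sorted_wrt (<) T'" unfolding that using sT sD by blast+
      have a2: "\<forall>x\<in>set D'. x < k" "\<forall>y\<in>set T'. k < y" "\<forall>x\<in>set D'. \<forall>y\<in>set T'. x < y"
        unfolding that using Dlt elT c1 by blast+
      show ?thesis unfolding sorted_wrt_append using a1 a2 by (auto simp: sorted_wrt_append)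
    qed
    have "take j cs = ?T" using tk[OF jl] Tj by simp
    then have "sorted_wrt (<) (drop j ?xs @ [k] @ take j cs)" using fin Dj by presburger
    moreover have "j < length cs" using jl ne by (metis One_nat_def Suc_pred length_butlast length_greater_0_conv less_Suc_eq_le)
    ultimately show "cyc_cond cs k" unfolding cyc_cond_def by blast
  qed
qed

lemma modn_cong: "x mod int n = y mod int n \<Longrightarrow> modn n x = modn n y"
  unfolding modn_def by simp

lemma modn_mod: "modn n x mod int n = x mod int n"
  unfolding modn_def by auto

lemma modn_range: "n > 0 \<Longrightarrow> 1 \<le> modn n x \<and> modn n x \<le> int n"
proof -
  assume "n > 0"
  then have "0 \<le> x mod int n" "x mod int n < int n" by simp_all
  then show ?thesis unfolding modn_def by auto
qed

lemma G1:
  fixes m :: nat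
  shows "sorted_wrt R (filter P [1..<m]) \<longleftrightarrow> (\<forall>p q. 1 \<le> p \<longrightarrow> p < q \<longrightarrow> q < m \<longrightarrow> P p \<longrightarrow> P q \<longrightarrow> R p q)"
proof -
  have "sorted_wrt R (filter P [1..<m]) \<longleftrightarrow> (\<forall>p\<in>set [1..<m]. \<forall>q\<in>set [1..<m]. p < q \<longrightarrow> P p \<longrightarrow> P q \<longrightarrow> R p q)"
    by (rule sorted_filter_iff[OF sorted_wrt_upt])
  also have "\<dots> \<longleftrightarrow> (\<forall>p q. 1 \<le> p \<longrightarrow> p < q \<longrightarrow> q < m \<longrightarrow> P p \<longrightarrow> P q \<longrightarrow> R p q)"
    by (auto; meson less_trans)
  finally show ?thesis .
qed

lemma upt_split1:
  fixes m j :: nat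
  assumes "1 \<le> j" "j \<le> m"
  shows "[1..<Suc m] = [1..<j] @ j # [Suc j..<Suc m]"
proof -
  have "[1..<Suc m] = [1..<j] @ [j..<Suc m]"
    using upt_add_eq_append[of 1 j "Suc m - j"] assms by simp
  also have "[j..<Suc m] = j # [Suc j..<Suc m]" using assms by (simp add: upt_conv_Cons)
  finally show ?thesis .
qed

context fsetup
begin

lemma Nlist_eq:
  "Nlist n a b k = map (\<lambda>i. modn n (c i)) (filter (\<lambda>i. c (i - 1) mod N = k mod N) [1..<Suc L])"
proof -
  have e: "2 * n - 1 = Suc L" using n2 by simp
  have f: "filter (\<lambda>i. a (i - 1) mod N = k mod N) [1..<Suc L]
         = filter (\<lambda>i. c (i - 1) mod N = k mod N) [1..<Suc L]"
  proof (rule filter_cong[OF refl])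
    fix i assume "i \<in> set [1..<Suc L]"
    then have "i - 1 \<le> L - 1" by auto
    then show "(a (i - 1) mod N = k mod N) = (c (i - 1) mod N = k mod N)" using c_a by simp
  qed
  have m: "map (\<lambda>i. modn n (b i)) xs = map (\<lambda>i. modn n (c i)) xs"
    if "set xs \<subseteq> {1..L}" for xs
  proof (rule map_cong[OF refl])
    fix i assume "i \<in> set xs"
    then have "1 \<le> i" "i \<le> L" using that by auto
    then show "modn n (b i) = modn n (c i)" using c_b modn_cong by metis
  qed
  have "set (filter (\<lambda>i. c (i - 1) mod N = k mod N) [1..<Suc L]) \<subseteq> {1..L}" by auto
  then show ?thesis unfolding Nlist_def e f using m by blast
qed

lemma dep_val0:
  assumes "1 \<le> i" "i \<le> L" "c (i - 1) mod N = 0"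
  shows "modn n (c i) = d i"
proof -
  have dr: "1 \<le> d i" "d i \<le> N - 1" using d_pos d_le assms by auto
  have "c i = c (i - 1) + d i" unfolding d_def by simp
  then have "c i mod N = d i mod N" using assms(3) by (metis mod_add_left_eq add.left_neutral)
  also have "\<dots> = d i" using dr by (simp add: mod_pos_pos_trivial)
  finally show ?thesis unfolding modn_def using dr by simp
qed

lemma dep_val:
  assumes "1 \<le> i" "i \<le> L" "1 \<le> k" "k \<le> N - 1" "c (i - 1) mod N = k"
  shows "(modn n (c i) - k) mod N = d i" "1 \<le> modn n (c i)" "modn n (c i) \<le> N" "modn n (c i) \<noteq> k"
proof -
  have dr: "1 \<le> d i" "d i \<le> N - 1" using d_pos d_le assms by auto
  have km: "c (i - 1) mod N = k mod N" using assms by simp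
  have "(modn n (c i) - k) mod N = (c i - k) mod N"
    using modn_mod[of n "c i"] by (metis mod_diff_left_eq)
  also have "c i - k = c (i - 1) - k + d i" unfolding d_def by simp
  also have "(c (i - 1) - k + d i) mod N = d i mod N" using modeq_shift[OF km] .
  also have "\<dots> = d i" using dr by (simp add: mod_pos_pos_trivial)
  finally show "(modn n (c i) - k) mod N = d i" .
  show "1 \<le> modn n (c i)" "modn n (c i) \<le> N" using modn_range Npos by auto
  show "modn n (c i) \<noteq> k"
  proof
    assume "modn n (c i) = k"
    then have "c i mod N = k" using modn_mod[of n "c i"] assms by simp
    then show False using cons_ne[OF assms(1,2)] assms(5) by simp
  qed
qed

lemma part0:
  "sorted_wrt (<) (Nlist n a b N) \<longleftrightarrow>
     (\<forall>p q. 1 \<le> p \<longrightarrow> p < q \<longrightarrow> q \<le> L \<longrightarrow> c (p - 1) mod N = 0 \<longrightarrow> c (q - 1) mod N = 0 \<longrightarrow> d p < d q)"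
proof -
  have "sorted_wrt (<) (Nlist n a b N) \<longleftrightarrow>
     sorted_wrt (\<lambda>x y. modn n (c x) < modn n (c y)) (filter (\<lambda>i. c (i - 1) mod N = N mod N) [1..<Suc L])"
    unfolding Nlist_eq sorted_wrt_map ..
  also have "\<dots> \<longleftrightarrow> (\<forall>p q. 1 \<le> p \<longrightarrow> p < q \<longrightarrow> q < Suc L \<longrightarrow> c (p - 1) mod N = N mod N
        \<longrightarrow> c (q - 1) mod N = N mod N \<longrightarrow> modn n (c p) < modn n (c q))"
    by (rule G1)
  also have "\<dots> \<longleftrightarrow> (\<forall>p q. 1 \<le> p \<longrightarrow> p < q \<longrightarrow> q \<le> L \<longrightarrow> c (p - 1) mod N = 0 \<longrightarrow> c (q - 1) mod N = 0 \<longrightarrow> d p < d q)"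
  proof (intro iffI allI impI)
    fix p q
    assume H: "\<forall>p q. 1 \<le> p \<longrightarrow> p < q \<longrightarrow> q < Suc L \<longrightarrow> c (p - 1) mod N = N mod N
        \<longrightarrow> c (q - 1) mod N = N mod N \<longrightarrow> modn n (c p) < modn n (c q)"
      and h: "1 \<le> p" "p < q" "q \<le> L" "c (p - 1) mod N = 0" "c (q - 1) mod N = 0"
    have "modn n (c p) < modn n (c q)" by (rule H[rule_format]) (use h in auto)
    moreover have "modn n (c p) = d p" by (rule dep_val0) (use h in auto)
    moreover have "modn n (c q) = d q" by (rule dep_val0) (use h in auto)
    ultimately show "d p < d q" by simp
  next
    fix p q
    assume H: "\<forall>p q. 1 \<le> p \<longrightarrow> p < q \<longrightarrow> q \<le> L \<longrightarrow> c (p - 1) mod N = 0 \<longrightarrow> c (q - 1) mod N = 0 \<longrightarrow> d p < d q"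
      and h: "1 \<le> p" "p < q" "q < Suc L" "c (p - 1) mod N = N mod N" "c (q - 1) mod N = N mod N"
    have h': "q \<le> L" "c (p - 1) mod N = 0" "c (q - 1) mod N = 0" using h by auto
    have "d p < d q" by (rule H[rule_format]) (use h h' in auto)
    moreover have "modn n (c p) = d p" by (rule dep_val0) (use h h' in auto)
    moreover have "modn n (c q) = d q" by (rule dep_val0) (use h h' in auto)
    ultimately show "modn n (c p) < modn n (c q)" by simp
  qed
  finally show ?thesis .
qed

lemma filt_split:
  assumes k: "1 \<le> k" "k \<le> N - 1"
  shows "filter (\<lambda>i. c (i - 1) mod N = k mod N) [1..<Suc L]
       = filter (\<lambda>i. c (i - 1) mod N = k mod N) [1..<be k] @ [be k]"
proof -
  let ?P = "\<lambda>i. c (i - 1) mod N = k mod N"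
  have br: "1 \<le> be k" "be k \<le> L" using be_range[OF k] by auto
  have u1: "[1..<Suc L] = [1..<be k] @ be k # [Suc (be k)..<Suc L]"
    by (rule upt_split1[OF br])
  have pb: "?P (be k)" using cls_be[OF k] k by simp
  have e: "filter ?P [Suc (be k)..<Suc L] = []"
    unfolding filter_empty_conv
  proof
    fix i assume "i \<in> set [Suc (be k)..<Suc L]"
    then have "be k < i" "i \<le> L" by auto
    then show "\<not> ?P i" using untouched_after[OF k] k by simp
  qed
  show ?thesis unfolding u1 filter_append using pb e by simp
qed

lemma partk:
  assumes k: "1 \<le> k" "k \<le> N - 1"
  shows "cyc_cond (Nlist n a b k) k \<longleftrightarrow>
     (\<forall>p q. 1 \<le> p \<longrightarrow> p < q \<longrightarrow> q < be k \<longrightarrow> c (p - 1) mod N = k \<longrightarrow> c (q - 1) mod N = k \<longrightarrow> d p < d q)"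
proof -
  let ?P = "\<lambda>i. c (i - 1) mod N = k mod N"
  let ?f = "\<lambda>i. modn n (c i)"
  let ?g = "\<lambda>x. (x - k) mod N"
  let ?xs = "map ?f (filter ?P [1..<be k])"
  have br: "1 \<le> be k" "be k \<le> L" using be_range[OF k] by auto
  have NL: "Nlist n a b k = ?xs @ [?f (be k)]" unfolding Nlist_eq filt_split[OF k] by simp
  have km: "k mod N = k" using k by simp
  have el: "\<forall>x\<in>set (butlast (Nlist n a b k)). 1 \<le> x \<and> x \<le> N \<and> x \<noteq> k"
  proof
    fix x assume "x \<in> set (butlast (Nlist n a b k))"
    then have "x \<in> set ?xs" unfolding NL by simp
    then obtain i where i: "i \<in> set [1..<be k]" "?P i" "x = ?f i" by auto
    have ir: "1 \<le> i" "i \<le> L" using i(1) br by auto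
    have ck: "c (i - 1) mod N = k" using i(2) km by simp
    show "1 \<le> x \<and> x \<le> N \<and> x \<noteq> k" using dep_val(2,3,4)[OF ir k ck] i(3) by simp
  qed
  have "cyc_cond (Nlist n a b k) k \<longleftrightarrow> sorted_wrt (\<lambda>x y. ?g x < ?g y) (butlast (Nlist n a b k))"
    by (rule cyc_lemma) (use k el NL in auto)
  also have "\<dots> \<longleftrightarrow> sorted_wrt (\<lambda>x y. ?g (?f x) < ?g (?f y)) (filter ?P [1..<be k])"
    unfolding NL by (simp add: sorted_wrt_map)
  also have "\<dots> \<longleftrightarrow> (\<forall>p q. 1 \<le> p \<longrightarrow> p < q \<longrightarrow> q < be k \<longrightarrow> ?P p \<longrightarrow> ?P q
       \<longrightarrow> ?g (?f p) < ?g (?f q))"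
    by (rule G1)
  also have "\<dots> \<longleftrightarrow> (\<forall>p q. 1 \<le> p \<longrightarrow> p < q \<longrightarrow> q < be k \<longrightarrow> c (p - 1) mod N = k \<longrightarrow> c (q - 1) mod N = k \<longrightarrow> d p < d q)"
  proof -
    have G: "?g (?f p) = d p" if "1 \<le> p" "p < be k" "c (p - 1) mod N = k" for p
      by (rule dep_val(1)) (use that k br in auto)
    show ?thesis
    proof (intro iffI allI impI)
      fix p q
      assume H: "\<forall>p q. 1 \<le> p \<longrightarrow> p < q \<longrightarrow> q < be k \<longrightarrow> ?P p \<longrightarrow> ?P q \<longrightarrow> ?g (?f p) < ?g (?f q)"
        and h: "1 \<le> p" "p < q" "q < be k" "c (p - 1) mod N = k" "c (q - 1) mod N = k"
      have "?g (?f p) < ?g (?f q)" by (rule H[rule_format]) (use h km in auto)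
      then show "d p < d q" using G[of p] G[of q] h by simp
    next
      fix p q
      assume H: "\<forall>p q. 1 \<le> p \<longrightarrow> p < q \<longrightarrow> q < be k \<longrightarrow> c (p - 1) mod N = k \<longrightarrow> c (q - 1) mod N = k \<longrightarrow> d p < d q"
        and h: "1 \<le> p" "p < q" "q < be k" "?P p" "?P q"
      have h': "c (p - 1) mod N = k" "c (q - 1) mod N = k" using h km by auto
      have "d p < d q" by (rule H[rule_format]) (use h h' in auto)
      then show "?g (?f p) < ?g (?f q)" using G[of p] G[of q] h h' by simp
    qed
  qed
  finally show ?thesis .
qed

definition "cycl \<longleftrightarrow> sorted_wrt (<) (Nlist n a b N) \<and> (\<forall>k. 1 \<le> k \<and> k < N \<longrightarrow> cyc_cond (Nlist n a b k) k)"

lemma cycl_iff: "cycl \<longleftrightarrow> Cyc'"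
proof
  assume C: Cyc'
  have late_cls: "c (q - 1) mod N = tok q" if "1 \<le> q" "q \<le> L" "late q" for q
    using that cls_be tok unfolding late_def by metis
  have A: "sorted_wrt (<) (Nlist n a b N)"
    unfolding part0
  proof (intro allI impI)
    fix p q assume h: "1 \<le> p" "p < q" "q \<le> L" "c (p - 1) mod N = 0" "c (q - 1) mod N = 0"
    have "\<not> late q"
    proof
      assume "late q"
      then have "c (q - 1) mod N = tok q" using late_cls h by simp
      moreover have "1 \<le> tok q" using tok h by simp
      ultimately show False using h by simp
    qed
    then show "d p < d q" using C h unfolding Cyc'_def by simp
  qed
  have B: "cyc_cond (Nlist n a b k) k" if k: "1 \<le> k" "k < N" for k
  proof -
    have k2: "k \<le> N - 1" using k by simp
    have "\<forall>p q. 1 \<le> p \<longrightarrow> p < q \<longrightarrow> q < be k \<longrightarrow> c (p - 1) mod N = k \<longrightarrow> c (q - 1) mod N = k \<longrightarrow> d p < d q"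
    proof (intro allI impI)
      fix p q assume h: "1 \<le> p" "p < q" "q < be k" "c (p - 1) mod N = k" "c (q - 1) mod N = k"
      have qL: "q \<le> L" using be_range[OF k(1) k2] h by simp
      have "\<not> late q"
      proof
        assume "late q"
        then have "c (q - 1) mod N = tok q" using late_cls h qL by simp
        then have "tok q = k" using h by simp
        then show False using \<open>late q\<close> h unfolding late_def by simp
      qed
      then show "d p < d q" using C h qL unfolding Cyc'_def by simp
    qed
    then show ?thesis using partk[OF k(1) k2] by blast
  qed
  show cycl unfolding cycl_def using A B by simp
next
  assume cy: cycl
  show Cyc' unfolding Cyc'_def
  proof (intro allI impI)
    fix p q assume h: "1 \<le> p" "p < q" "q \<le> L" "c (p - 1) mod N = c (q - 1) mod N" "\<not> late q"
    define k where "k = c (q - 1) mod N"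
    have kr: "0 \<le> k" "k \<le> N - 1" unfolding k_def using Npos pos_mod_bound pos_mod_sign by auto
    show "d p < d q"
    proof (cases "k = 0")
      case True
      then show ?thesis using cy h unfolding cycl_def part0 k_def by simp
    next
      case False
      then have k1: "1 \<le> k" using kr by simp
      have "\<not> be k < q" using untouched_after[OF k1 kr(2), of q] h unfolding k_def by auto
      moreover have "q \<noteq> be k" using late_be[OF k1 kr(2)] h by auto
      ultimately have "q < be k" by simp
      moreover have "cyc_cond (Nlist n a b k) k" using cy k1 kr unfolding cycl_def by simp
      ultimately show ?thesis using partk[OF k1 kr(2)] h unfolding k_def by simp
    qed
  qed
qed

end

context fsetup
begin

lemma conj_facts:
  assumes j: "1 \<le> j" "j \<le> L"
  shows "conj_refl rs j = aff_refl n 0 (M j - c 0)" "conj_refl rs j 0 = M j - c 0"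
    "0 mod N \<noteq> (M j - c 0) mod N"
proof -
  let ?xs = "take (j - 1) rs"
  have inv: "\<And>f. f \<in> set ?xs \<Longrightarrow> f \<circ> f = id" using rs_invol set_take_rs by blast
  have inv2: "\<And>f. f \<in> set (rev ?xs) \<Longrightarrow> f \<circ> f = id" using inv by simp
  have WV: "W (j - 1) \<circ> lprod (rev ?xs) = id" unfolding W_def using lprod_rev_inv[OF inv] .
  have VW0: "lprod (rev ?xs) \<circ> lprod (rev (rev ?xs)) = id" by (rule lprod_rev_inv[OF inv2])
  have VW: "lprod (rev ?xs) \<circ> W (j - 1) = id" unfolding W_def using VW0 by (simp only: rev_rev_ident)
  have r: "rs ! (j - 1) = aff_refl n (c (j - 1)) (c j)" using c_step' j by blast
  have ne: "c (j - 1) mod N \<noteq> c j mod N" using cons_ne j by blast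
  have "conj_refl rs j = W (j - 1) \<circ> aff_refl n (c (j - 1)) (c j) \<circ> lprod (rev ?xs)"
    unfolding conj_refl_def W_def r ..
  also have "\<dots> = aff_refl n (W (j - 1) (c (j - 1))) (W (j - 1) (c j))"
    by (rule conj_aff_refl[OF W_per WV VW ne])
  also have "W (j - 1) (c (j - 1)) = c 0" using ride_W j by simp
  also have "W (j - 1) (c j) = M j" unfolding M_def ..
  also have "aff_refl n (c 0) (M j) = aff_refl n 0 (M j - c 0)"
    by (rule aff_refl_shift) (use c0_mod in simp_all)
  finally show C: "conj_refl rs j = aff_refl n 0 (M j - c 0)" .
  show "conj_refl rs j 0 = M j - c 0" unfolding C by (rule aff_refl_at_p)
  show "0 mod N \<noteq> (M j - c 0) mod N"
  proof
    assume "0 mod N = (M j - c 0) mod N"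
    then have "M j mod N = c 0 mod N" by (metis mod_eq_dvd_iff mod_0 dvd_0_right mod_eq_0_iff_dvd)
    then have "W (j - 1) (c j) mod N = W (j - 1) (c (j - 1)) mod N" using ride_W j unfolding M_def by simp
    then have "c j mod N = c (j - 1) mod N" using class_inj[OF W_per W_inj] by blast
    then show False using ne by simp
  qed
qed

lemma main:
  "(\<forall>j\<in>{1..L}. 0 mod N \<noteq> conj_refl rs j 0 mod N \<and> conj_refl rs j = aff_refl n 0 (conj_refl rs j 0))
   \<and> (cycl \<longleftrightarrow> (\<forall>j\<in>{1..<L}. conj_refl rs j 0 < conj_refl rs (j + 1) 0))"
proof
  show "\<forall>j\<in>{1..L}. 0 mod N \<noteq> conj_refl rs j 0 mod N \<and> conj_refl rs j = aff_refl n 0 (conj_refl rs j 0)"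
    using conj_facts by simp
  have "(\<forall>j\<in>{1..<L}. conj_refl rs j 0 < conj_refl rs (j + 1) 0) \<longleftrightarrow> Inc"
  proof -
    have "conj_refl rs j 0 < conj_refl rs (j + 1) 0 \<longleftrightarrow> M j < M (Suc j)" if "1 \<le> j" "j < L" for j
      using conj_facts(2)[of j] conj_facts(2)[of "Suc j"] that by simp
    then show ?thesis unfolding Inc_def by auto
  qed
  then show "cycl \<longleftrightarrow> (\<forall>j\<in>{1..<L}. conj_refl rs j 0 < conj_refl rs (j + 1) 0)"
    using cycl_iff Inc_Cyc_iff by simp
qed

end

theorem proposition4p4:
  fixes n :: nat and rs :: "(int \<Rightarrow> int) list"
  assumes "n \<ge> 2" and "rs \<in> fact_lambda n" and "tree_like n rs"
  shows "(\<forall>j\<in>{1..2*n-2}. 0 mod int n \<noteq> conj_refl rs j 0 mod int n \<and>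
            conj_refl rs j = aff_refl n 0 (conj_refl rs j 0))
         \<and> (cyclic n rs \<longleftrightarrow>
              (\<forall>j\<in>{1..<2*n-2}. conj_refl rs j 0 < conj_refl rs (j + 1) 0))"
proof -
  have f: "length rs = 2*n-2" "lprod rs = lambda_n n" using assms(2) unfolding fact_lambda_def by auto
  obtain a0 b0 where r0: "tree_like_repr n rs a0 b0" using assms(3) unfolding tree_like_def by blast
  interpret F0: fsetup n rs a0 b0 using assms(1) f r0 by unfold_locales
  have M0: "(\<forall>j\<in>{1..2*n-2}. 0 mod int n \<noteq> conj_refl rs j 0 mod int n \<and>
            conj_refl rs j = aff_refl n 0 (conj_refl rs j 0))
         \<and> (F0.cycl \<longleftrightarrow> (\<forall>j\<in>{1..<2*n-2}. conj_refl rs j 0 < conj_refl rs (j + 1) 0))"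
    by (rule F0.main)
  have "cyclic n rs \<longleftrightarrow> (\<forall>j\<in>{1..<2*n-2}. conj_refl rs j 0 < conj_refl rs (j + 1) 0)"
  proof
    assume "cyclic n rs"
    then obtain a b where r: "tree_like_repr n rs a b" and
      cy: "sorted_wrt (<) (Nlist n a b (int n)) \<and> (\<forall>k. 1 \<le> k \<and> k < int n \<longrightarrow> cyc_cond (Nlist n a b k) k)"
      unfolding cyclic_def by blast
    interpret F: fsetup n rs a b using assms(1) f r by unfold_locales
    have "F.cycl" unfolding F.cycl_def using cy .
    then show "\<forall>j\<in>{1..<2*n-2}. conj_refl rs j 0 < conj_refl rs (j + 1) 0" using F.main by blast
  next
    assume "\<forall>j\<in>{1..<2*n-2}. conj_refl rs j 0 < conj_refl rs (j + 1) 0"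
    then have "F0.cycl" using M0 by blast
    then show "cyclic n rs" unfolding cyclic_def F0.cycl_def using r0 by blast
  qed
  then show ?thesis using M0 by blast
qed

end
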